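(* For proposition letters $p,o,q$, the formula $\mathcal{K}hm(p,o,q)\wedge\neg\mathcal{K}hm(p,\bot,q)\to\mathcal{K}hm(p,\bot,o)$ is valid, i.e., true at every state of every model.
   Context: Fix a countable set of proposition letters $\mathbf{P}$ and a countable non-empty set of action symbols $\Sigma$. Formulas: $\phi ::= p \mid \neg\phi \mid (\phi\wedge\phi) \mid \mathcal{K}hm(\phi,\phi,\phi)$; $\top,\bot,\to$ as usual. A model is $(S,\mathcal{R},\mathcal{V})$ with $S\neq\emptyset$, $\mathcal{R}:\Sigma\to 2^{S\times S}$, $\mathcal{V}:S\to 2^{\mathbf{P}}$. For $\sigma=a_1\cdots a_n\in\Sigma^*$, $s\xrightarrow{\sigma}t$ means there is a path $s\xrightarrow{a_1}\cdots\xrightarrow{a_n}t$ ($s\xrightarrow{\epsilon}s$ for the empty sequence); $\sigma_k=a_1\cdots a_k$, $\sigma_0=\epsilon$. $\sigma$ is strongly $\chi$-executable at $s'$ if for each $0\le k<n$, every $t$ with $s'\xrightarrow{\sigma_k}t$ has an $a_{k+1}$-successor, and every $t$ with $s'\xrightarrow{\sigma_k}t$ for $0<k<n$ satisfies $\chi$. $\mathcal{M},s\vDash\mathcal{K}hm(\psi,\chi,\phi)$ iff there is $\sigma\in\Sigma^*$ such that for every $s'$ with $\mathcal{M},s'\vDash\psi$, $\sigma$ is strongly $\chi$-executable at $s'$ and $\mathcal{M},t\vDash\phi$ for all $t$ with $s'\xrightarrow{\sigma}t$; atoms and Booleans are interpreted as usual ($\mathcal{M},s\vDash p$ iff $p\in\mathcal{V}(s)$).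 *)

theory Defs
  imports "HOL-Library.Countable"
begin

datatype 'p fm = Atom 'p | Neg "'p fm" | Conj "'p fm" "'p fm" | Khm "'p fm" "'p fm" "'p fm"

definition fbot :: "'p fm" where "fbot = Conj (Atom undefined) (Neg (Atom undefined))"
definition ftop :: "'p fm" where "ftop = Neg fbot"
definition Imp :: "'p fm \<Rightarrow> 'p fm \<Rightarrow> 'p fm" where "Imp a b = Neg (Conj a (Neg b))"

record ('s, 'a, 'p) model =
  St :: "'s set"
  Rel :: "'a \<Rightarrow> ('s \<times> 's) set"
  Val :: "'s \<Rightarrow> 'p set"

definition is_model :: "('s, 'a, 'p) model \<Rightarrow> bool" where
  "is_model M \<longleftrightarrow> St M \<noteq> {} \<and> (\<forall>a. Rel M a \<subseteq> St M \<times> St M)"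

fun reach :: "('s, 'a, 'p) model \<Rightarrow> 's \<Rightarrow> 'a list \<Rightarrow> 's \<Rightarrow> bool" where
  "reach M s [] t = (s = t)"
| "reach M s (a # \<sigma>) t = (\<exists>u. (s, u) \<in> Rel M a \<and> reach M u \<sigma> t)"

definition strong_exec :: "('s, 'a, 'p) model \<Rightarrow> ('s \<Rightarrow> bool) \<Rightarrow> 'a list \<Rightarrow> 's \<Rightarrow> bool" where
  "strong_exec M chi \<sigma> s' \<longleftrightarrow>
     (\<forall>k < length \<sigma>. \<forall>t. reach M s' (take k \<sigma>) t \<longrightarrow>
         (\<exists>u. (t, u) \<in> Rel M (\<sigma> ! k)) \<and> (0 < k \<longrightarrow> chi t))"

primrec sat :: "('s, 'a, 'p) model \<Rightarrow> 's \<Rightarrow> 'p fm \<Rightarrow> bool" where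
  "sat M s (Atom p) = (p \<in> Val M s)"
| "sat M s (Neg \<phi>) = (\<not> sat M s \<phi>)"
| "sat M s (Conj \<phi> \<psi>) = (sat M s \<phi> \<and> sat M s \<psi>)"
| "sat M s (Khm \<psi> \<chi> \<phi>) =
     (\<exists>\<sigma>. \<forall>s' \<in> St M. sat M s' \<psi> \<longrightarrow>
        strong_exec M (\<lambda>t. sat M t \<chi>) \<sigma> s' \<and>
        (\<forall>t. reach M s' \<sigma> t \<longrightarrow> sat M t \<phi>))"

end

theory Submission
  imports Defs
begin

lemma fbot_false[simp]: "\<not> sat M s fbot"
  by (simp add: fbot_def)

lemma se_nil: "strong_exec M chi [] s"
  by (simp add: strong_exec_def)

lemma se_single: "strong_exec M chi [a] s \<longleftrightarrow> (\<exists>u. (s,u) \<in> Rel M a)"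
  by (simp add: strong_exec_def)

lemma se_two:
  assumes "strong_exec M chi (a # b # \<tau>) s"
  shows "(\<exists>u. (s,u) \<in> Rel M a) \<and> (\<forall>t. (s,t) \<in> Rel M a \<longrightarrow> chi t)"
proof -
  have "(\<exists>u. (s,u) \<in> Rel M a)" using assms[unfolded strong_exec_def, rule_format, of 0 s] by simp
  moreover have "\<forall>t. (s,t) \<in> Rel M a \<longrightarrow> chi t"
  proof (intro allI impI)
    fix t assume "(s,t) \<in> Rel M a"
    hence "reach M s (take 1 (a # b # \<tau>)) t" by simp
    thus "chi t" using assms[unfolded strong_exec_def, rule_format, of 1 t] by simp
  qed
  ultimately show ?thesis by blast
qed

theorem mainTheorem5:
  fixes p r q :: "'p::countable"
  shows "\<forall>M :: ('s, 'a::countable, 'p) model. is_model M \<longrightarrow>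
           (\<forall>s \<in> St M. sat M s
              (Imp (Conj (Khm (Atom p) (Atom r) (Atom q)) (Neg (Khm (Atom p) fbot (Atom q))))
                   (Khm (Atom p) fbot (Atom r))))"
proof (intro allI impI ballI)
  fix M :: "('s, 'a, 'p) model" and s
  show "sat M s (Imp (Conj (Khm (Atom p) (Atom r) (Atom q)) (Neg (Khm (Atom p) fbot (Atom q))))
                   (Khm (Atom p) fbot (Atom r)))"
  proof (cases "sat M s (Khm (Atom p) (Atom r) (Atom q)) \<and> \<not> sat M s (Khm (Atom p) fbot (Atom q))")
    case False thus ?thesis by (auto simp: Imp_def)
  next
    case True
    then obtain \<sigma> where H: "\<forall>s' \<in> St M. p \<in> Val M s' \<longrightarrow>
        strong_exec M (\<lambda>t. r \<in> Val M t) \<sigma> s' \<and> (\<forall>t. reach M s' \<sigma> t \<longrightarrow> q \<in> Val M t)"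
      and N: "\<not> sat M s (Khm (Atom p) fbot (Atom q))" by auto
    show ?thesis
    proof (cases \<sigma>)
      case Nil
      have "sat M s (Khm (Atom p) fbot (Atom q))"
        using H Nil by (auto simp: se_nil intro!: exI[of _ "[]"])
      with N show ?thesis by blast
    next
      case (Cons a \<tau>)
      show ?thesis
      proof (cases \<tau>)
        case Nil
        have "sat M s (Khm (Atom p) fbot (Atom q))"
          using H \<open>\<sigma> = a # \<tau>\<close> Nil by (auto simp: se_single intro!: exI[of _ "[a]"])
        with N show ?thesis by blast
      next
        case (Cons b \<rho>)
        have "sat M s (Khm (Atom p) fbot (Atom r))"
        proof -
          show ?thesis
            apply simp
            apply (rule exI[of _ "[a]"])
            using H se_two[of M "\<lambda>t. r \<in> Val M t" a b \<rho>] \<open>\<sigma> = a # \<tau>\<close> Cons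
            by (auto simp: se_single)
        qed
        thus ?thesis by (simp add: Imp_def)
      qed
    qed
  qed
qed

end
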